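(* Let \((G,k)\) be an instance of Vertex Cover. None of Reduction Rules 1, 2 and 3 applies to \((G,k)\) if and only if \(\mathrm{surplus}(G)\geq 2\).
   Context: All graphs are finite, undirected and simple. \(LPVC(G)\) is the LP: minimize \(\sum_v x_v\) subject to \(x_u+x_v\ge1\) for each edge \(\{u,v\}\) and \(0\le x_v\le1\). For \(X\subseteq V(G)\), \(N(X)\) is the set of vertices outside \(X\) adjacent to some vertex of \(X\); for an independent set \(Z\), \(\mathrm{surplus}(Z)=|N(Z)|-|Z|\); \(\mathrm{surplus}(G)\) is the minimum of \(\mathrm{surplus}(Z)\) over all nonempty independent sets \(Z\) of \(G\). Reduction Rule 1 applies iff the all-\(\frac12\) assignment is not the unique optimum solution of \(LPVC(G)\). Reduction Rule 2 applies iff Rule 1 does not apply and there is an independent set \(Z\) with \(\mathrm{surplus}(Z)=1\) such that \(N(Z)\) is not independent. Reduction Rule 3 applies iff neither Rule 1 nor Rule 2 applies and there is an independent set \(Z\) with \(\mathrm{surplus}(Z)=1\) such that \(N(Z)\) is independent. *)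

theory Defs
  imports Main "HOL-Library.Extended_Real"
begin

definition simple_graph :: "'a set \<Rightarrow> 'a set set \<Rightarrow> bool" where
  "simple_graph V E \<longleftrightarrow> finite V \<and>
     (\<forall>e\<in>E. \<exists>u v. e = {u, v} \<and> u \<noteq> v \<and> u \<in> V \<and> v \<in> V)"

definition lpvc_feasible :: "'a set \<Rightarrow> 'a set set \<Rightarrow> ('a \<Rightarrow> real) \<Rightarrow> bool" where
  "lpvc_feasible V E x \<longleftrightarrow>
     (\<forall>v\<in>V. 0 \<le> x v \<and> x v \<le> 1) \<and> (\<forall>u v. {u, v} \<in> E \<longrightarrow> x u + x v \<ge> 1)"

definition lpvc_optimal :: "'a set \<Rightarrow> 'a set set \<Rightarrow> ('a \<Rightarrow> real) \<Rightarrow> bool" where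
  "lpvc_optimal V E x \<longleftrightarrow> lpvc_feasible V E x \<and>
     (\<forall>y. lpvc_feasible V E y \<longrightarrow> (\<Sum>v\<in>V. x v) \<le> (\<Sum>v\<in>V. y v))"

definition nbhd :: "'a set \<Rightarrow> 'a set set \<Rightarrow> 'a set \<Rightarrow> 'a set" where
  "nbhd V E X = {v \<in> V. v \<notin> X \<and> (\<exists>u\<in>X. {u, v} \<in> E)}"

definition independent :: "'a set \<Rightarrow> 'a set set \<Rightarrow> 'a set \<Rightarrow> bool" where
  "independent V E Z \<longleftrightarrow> Z \<subseteq> V \<and> (\<forall>u\<in>Z. \<forall>v\<in>Z. {u, v} \<notin> E)"

definition surplus :: "'a set \<Rightarrow> 'a set set \<Rightarrow> 'a set \<Rightarrow> int" where
  "surplus V E Z = int (card (nbhd V E Z)) - int (card Z)"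

text \<open>surplus(G): minimum over nonempty independent sets (infinity if there is none,
  i.e. for the empty graph).\<close>
definition surplus_graph :: "'a set \<Rightarrow> 'a set set \<Rightarrow> ereal" where
  "surplus_graph V E = (INF Z \<in> {Z. Z \<noteq> {} \<and> independent V E Z}. ereal (real_of_int (surplus V E Z)))"

definition rule1_applies :: "'a set \<Rightarrow> 'a set set \<Rightarrow> bool" where
  "rule1_applies V E \<longleftrightarrow>
     \<not> (lpvc_optimal V E (\<lambda>_. 1/2) \<and>
        (\<forall>y. lpvc_optimal V E y \<longrightarrow> (\<forall>v\<in>V. y v = 1/2)))"

definition rule2_applies :: "'a set \<Rightarrow> 'a set set \<Rightarrow> bool" where
  "rule2_applies V E \<longleftrightarrow> \<not> rule1_applies V E \<and>
     (\<exists>Z. independent V E Z \<and> surplus V E Z = 1 \<and> \<not> independent V E (nbhd V E Z))"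

definition rule3_applies :: "'a set \<Rightarrow> 'a set set \<Rightarrow> bool" where
  "rule3_applies V E \<longleftrightarrow> \<not> rule1_applies V E \<and> \<not> rule2_applies V E \<and>
     (\<exists>Z. independent V E Z \<and> surplus V E Z = 1 \<and> independent V E (nbhd V E Z))"

end

theory Submission
  imports Defs
begin

lemma edge_in_V:
  assumes "simple_graph V E" "{u, v} \<in> E"
  shows "u \<in> V" "v \<in> V"
  using assms unfolding simple_graph_def by (auto simp: doubleton_eq_iff)

lemma key:
  assumes sg: "simple_graph V E"
    and H: "\<forall>Z. Z \<noteq> {} \<and> independent V E Z \<longrightarrow> surplus V E Z \<ge> 1"
  shows "lpvc_feasible V E y \<Longrightarrow> (\<Sum>v\<in>V. y v - 1/2) \<ge> 0 \<and>
           ((\<exists>v\<in>V. y v \<noteq> 1/2) \<longrightarrow> (\<Sum>v\<in>V. y v - 1/2) > 0)"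
proof (induction "card {v\<in>V. y v \<noteq> 1/2}" arbitrary: y rule: less_induct)
  case less
  have fin: "finite V" using sg simple_graph_def by blast
  have feas: "\<And>v. v \<in> V \<Longrightarrow> 0 \<le> y v \<and> y v \<le> 1"
    and edge: "\<And>u v. {u, v} \<in> E \<Longrightarrow> y u + y v \<ge> 1"
    using less.prems unfolding lpvc_feasible_def by auto
  define N where "N = {v\<in>V. y v < 1/2}"
  define P where "P = {v\<in>V. y v > 1/2}"
  show ?case
  proof (cases "N = {}")
    case True
    hence ge: "\<And>v. v \<in> V \<Longrightarrow> y v - 1/2 \<ge> 0" unfolding N_def by force
    have "(\<Sum>v\<in>V. y v - 1/2) \<ge> 0" using ge by (simp add: sum_nonneg)
    moreover have "(\<exists>v\<in>V. y v \<noteq> 1/2) \<longrightarrow> (\<Sum>v\<in>V. y v - 1/2) > 0"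
    proof
      assume "\<exists>v\<in>V. y v \<noteq> 1/2"
      then obtain w where w: "w \<in> V" "y w \<noteq> 1/2" by blast
      have "0 < y w - 1/2" using ge[OF w(1)] w(2) by auto
      thus "(\<Sum>v\<in>V. y v - 1/2) > 0" by (rule sum_pos2[OF fin w(1)]) (use ge in auto)
    qed
    ultimately show ?thesis by blast
  next
    case False
    define D where "D = {v\<in>V. y v \<noteq> 1/2}"
    define a where "a = Min ((\<lambda>v. \<bar>y v - 1/2\<bar>) ` D)"
    have finD: "finite D" using fin D_def by auto
    have Dne: "D \<noteq> {}" using False unfolding N_def D_def by auto
    have a_le: "\<And>v. v \<in> D \<Longrightarrow> a \<le> \<bar>y v - 1/2\<bar>" unfolding a_def using finD by auto
    have "a \<in> (\<lambda>v. \<bar>y v - 1/2\<bar>) ` D" unfolding a_def using finD Dne by (intro Min_in) auto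
    then obtain w where w: "w \<in> D" "\<bar>y w - 1/2\<bar> = a" by auto
    have apos: "a > 0" using w unfolding D_def by auto
    define y' where "y' v = (if y v > 1/2 then y v - a else if y v < 1/2 then y v + a else y v)" for v
    have feas': "lpvc_feasible V E y'"
      unfolding lpvc_feasible_def
    proof (intro conjI allI impI ballI)
      fix v assume v: "v \<in> V"
      show "0 \<le> y' v" "y' v \<le> 1" using feas[OF v] a_le[of v] v apos unfolding y'_def D_def
        by (auto split: if_splits)
    next
      fix u v assume e: "{u, v} \<in> E"
      have uv: "u \<in> V" "v \<in> V" using edge_in_V[OF sg e] by auto
      have s: "y u + y v \<ge> 1" using edge[OF e] .
      show "1 \<le> y' u + y' v" using s a_le[of u] a_le[of v] uv unfolding y'_def D_def
        by (auto split: if_splits)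
    qed
    have sub: "{v\<in>V. y' v \<noteq> 1/2} \<subset> D"
    proof
      show "{v\<in>V. y' v \<noteq> 1/2} \<subseteq> D" unfolding D_def y'_def using apos by auto
      have "y' w = 1/2" using w unfolding y'_def D_def by (auto split: if_splits)
      thus "{v\<in>V. y' v \<noteq> 1/2} \<noteq> D" using w(1) by auto
    qed
    have IH: "(\<Sum>v\<in>V. y' v - 1/2) \<ge> 0"
    proof -
      have "card {v\<in>V. y' v \<noteq> 1/2} < card {v\<in>V. y v \<noteq> 1/2}"
        using psubset_card_mono[OF finD sub] unfolding D_def .
      from less.hyps[OF this feas'] show ?thesis by blast
    qed
    have pw: "\<And>v. y v - 1/2 = (y' v - 1/2) + ((if y v > 1/2 then a else 0) - (if y v < 1/2 then a else 0))"
      unfolding y'_def by auto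
    have "(\<Sum>v\<in>V. y v - 1/2) = (\<Sum>v\<in>V. y' v - 1/2) + ((\<Sum>v\<in>V. if y v > 1/2 then a else 0) - (\<Sum>v\<in>V. if y v < 1/2 then a else 0))"
      by (simp only: pw sum.distrib sum_subtractf)
    also have "(\<Sum>v\<in>V. if y v > 1/2 then a else 0) = real (card P) * a"
      using sum.inter_filter[OF fin, of "\<lambda>_. a" "\<lambda>v. y v > 1/2"] unfolding P_def by simp
    also have "(\<Sum>v\<in>V. if y v < 1/2 then a else 0) = real (card N) * a"
      using sum.inter_filter[OF fin, of "\<lambda>_. a" "\<lambda>v. y v < 1/2"] unfolding N_def by simp
    finally have eq: "(\<Sum>v\<in>V. y v - 1/2) = (\<Sum>v\<in>V. y' v - 1/2) + (real (card P) - real (card N)) * a"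
      by (simp add: algebra_simps)
    have indN: "independent V E N"
      unfolding independent_def N_def using edge by fastforce
    have "surplus V E N \<ge> 1" using H False indN by blast
    hence c1: "card (nbhd V E N) \<ge> card N + 1" unfolding surplus_def by linarith
    have "nbhd V E N \<subseteq> P"
    proof
      fix v assume "v \<in> nbhd V E N"
      then obtain u where "v \<in> V" "u \<in> N" "{u, v} \<in> E" unfolding nbhd_def by auto
      thus "v \<in> P" using edge[of u v] unfolding N_def P_def by auto
    qed
    hence "card (nbhd V E N) \<le> card P" using fin P_def by (intro card_mono) auto
    hence "real (card P) - real (card N) \<ge> 1" using c1 by linarith
    hence "(real (card P) - real (card N)) * a \<ge> a" using apos by (simp add: mult_le_cancel_right1)
    hence "(\<Sum>v\<in>V. y v - 1/2) > 0" using eq IH apos by linarith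
    thus ?thesis by simp
  qed
qed

lemma rule1_iff:
  assumes sg: "simple_graph V E"
  shows "\<not> rule1_applies V E \<longleftrightarrow> (\<forall>Z. Z \<noteq> {} \<and> independent V E Z \<longrightarrow> surplus V E Z \<ge> 1)"
proof
  assume nr: "\<not> rule1_applies V E"
  hence opt: "lpvc_optimal V E (\<lambda>_. 1/2)" and uniq: "\<And>y. lpvc_optimal V E y \<Longrightarrow> \<forall>v\<in>V. y v = 1/2"
    unfolding rule1_applies_def by auto
  show "\<forall>Z. Z \<noteq> {} \<and> independent V E Z \<longrightarrow> surplus V E Z \<ge> 1"
  proof (intro allI impI, rule ccontr)
    fix Z assume Z: "Z \<noteq> {} \<and> independent V E Z" and ns: "\<not> surplus V E Z \<ge> 1"
    have fin: "finite V" using sg simple_graph_def by blast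
    define Nb where "Nb = nbhd V E Z"
    have ZV: "Z \<subseteq> V" and indZ: "\<And>u v. u \<in> Z \<Longrightarrow> v \<in> Z \<Longrightarrow> {u, v} \<notin> E"
      using Z unfolding independent_def by auto
    have NbV: "Nb \<subseteq> V" and disj: "Nb \<inter> Z = {}" unfolding Nb_def nbhd_def by auto
    have cNb: "card Nb \<le> card Z" using ns unfolding surplus_def Nb_def by linarith
    define y where "y v = (if v \<in> Z then 0 else if v \<in> Nb then 1 else (1/2::real))" for v
    have feas: "lpvc_feasible V E y"
      unfolding lpvc_feasible_def
    proof (intro conjI allI impI ballI)
      fix v show "0 \<le> y v" "y v \<le> 1" unfolding y_def by auto
    next
      fix u v assume e: "{u, v} \<in> E"
      have uv: "u \<in> V" "v \<in> V" using edge_in_V[OF sg e] by auto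
      have e': "{v, u} \<in> E" using e by (simp add: insert_commute)
      show "1 \<le> y u + y v"
      proof (cases "u \<in> Z")
        case True
        hence "v \<notin> Z" using indZ e by blast
        hence "v \<in> Nb" using True uv e unfolding Nb_def nbhd_def by auto
        thus ?thesis using True `v \<notin> Z` unfolding y_def by auto
      next
        case False
        show ?thesis
        proof (cases "v \<in> Z")
          case True
          hence "u \<in> Nb" using False uv e' unfolding Nb_def nbhd_def by auto
          thus ?thesis using True False unfolding y_def by auto
        qed (use False in \<open>auto simp: y_def\<close>)
      qed
    qed
    have pw: "\<And>v. y v - 1/2 = (if v \<in> Nb then 1/2 else 0) - (if v \<in> Z then 1/2 else 0)"
      unfolding y_def using disj by auto
    have "(\<Sum>v\<in>V. y v - 1/2) = (\<Sum>v\<in>V. if v \<in> Nb then 1/2 else 0) - (\<Sum>v\<in>V. if v \<in> Z then (1/2::real) else 0)"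
      by (simp only: pw sum_subtractf)
    also have "(\<Sum>v\<in>V. if v \<in> Nb then 1/2 else 0) = real (card Nb) / 2"
    proof -
      have "{x\<in>V. x \<in> Nb} = Nb" using NbV by auto
      with sum.inter_filter[OF fin, of "\<lambda>_. 1/2::real" "\<lambda>v. v \<in> Nb"] show ?thesis by simp
    qed
    also have "(\<Sum>v\<in>V. if v \<in> Z then 1/2 else 0) = real (card Z) / 2"
    proof -
      have "{x\<in>V. x \<in> Z} = Z" using ZV by auto
      with sum.inter_filter[OF fin, of "\<lambda>_. 1/2::real" "\<lambda>v. v \<in> Z"] show ?thesis by simp
    qed
    finally have "(\<Sum>v\<in>V. y v - 1/2) \<le> 0" using cNb by simp
    hence le: "(\<Sum>v\<in>V. y v) \<le> (\<Sum>v\<in>V. (1/2::real))" by (simp add: sum_subtractf)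
    have "lpvc_optimal V E y"
      using opt feas le unfolding lpvc_optimal_def by force
    with uniq have "\<forall>v\<in>V. y v = 1/2" by blast
    moreover obtain z where "z \<in> Z" using Z by blast
    ultimately have "y z = 1/2" using ZV by blast
    thus False using \<open>z \<in> Z\<close> unfolding y_def by simp
  qed
next
  assume H: "\<forall>Z. Z \<noteq> {} \<and> independent V E Z \<longrightarrow> surplus V E Z \<ge> 1"
  have f: "lpvc_feasible V E (\<lambda>_. 1/2)" unfolding lpvc_feasible_def by auto
  have opt: "lpvc_optimal V E (\<lambda>_. 1/2)" unfolding lpvc_optimal_def
  proof (intro conjI f allI impI)
    fix y assume "lpvc_feasible V E y"
    hence "(\<Sum>v\<in>V. y v - 1/2) \<ge> 0" using key[OF sg H] by blast
    thus "(\<Sum>v\<in>V. (1/2::real)) \<le> (\<Sum>v\<in>V. y v)" by (simp add: sum_subtractf)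
  qed
  have "\<forall>y. lpvc_optimal V E y \<longrightarrow> (\<forall>v\<in>V. y v = 1/2)"
  proof (intro allI impI)
    fix y assume o: "lpvc_optimal V E y"
    hence fy: "lpvc_feasible V E y" and "(\<Sum>v\<in>V. y v) \<le> (\<Sum>v\<in>V. (1/2::real))"
      using f unfolding lpvc_optimal_def by auto
    hence "(\<Sum>v\<in>V. y v - 1/2) \<le> 0" by (simp add: sum_subtractf)
    thus "\<forall>v\<in>V. y v = 1/2" using key[OF sg H fy] by force
  qed
  thus "\<not> rule1_applies V E" using opt unfolding rule1_applies_def by blast
qed

theorem lemma10:
  fixes V :: "'a set" and E :: "'a set set" and k :: nat
  assumes "simple_graph V E"
  shows "(\<not> rule1_applies V E \<and> \<not> rule2_applies V E \<and> \<not> rule3_applies V E)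
         \<longleftrightarrow> surplus_graph V E \<ge> 2"
proof -
  have r: "surplus_graph V E \<ge> 2 \<longleftrightarrow> (\<forall>Z. Z \<noteq> {} \<and> independent V E Z \<longrightarrow> surplus V E Z \<ge> 2)"
    unfolding surplus_graph_def le_INF_iff by auto
  have e: "surplus V E {} = 0" unfolding surplus_def nbhd_def by simp
  show ?thesis unfolding r rule2_applies_def rule3_applies_def rule1_iff[OF assms]
    using e by (smt (verit))
qed

end
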